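(* Let $\gamma$ be a consistent family of grafts for a tree $\mathcal T$. Then the hybrid $\mathrm{hybr}(\mathcal T,\gamma)$ is a tree.
   Context: A tree is a pair $\mathcal T=(Q,<_{\mathcal T})$ with $<_{\mathcal T}$ irreflexive transitive such that each set $\{v:v<_{\mathcal T}x\}$ is well-ordered; nodes are elements of $Q$; $x\parallel_{\mathcal T}y$ means $x,y$ incomparable; $\max\mathcal T$ = set of maximal nodes; $0_{\mathcal T}$ = least node (if it exists); for a set $A$ of nodes $A{\downarrow}_{\mathcal T}=\{v:\exists a\in A\ a\le_{\mathcal T}v\}$; if $A$ is an antichain and $x\in A{\downarrow}_{\mathcal T}$, $\mathrm{root}_{\mathcal T}(x,A)$ is the unique $r\in A$ with $r\le_{\mathcal T}x$. A graft for $\mathcal T$ is a tree $\mathcal G$ with more than one node, with a least node $0_{\mathcal G}\in\mathrm{nodes}\,\mathcal T$, such that $\max\mathcal G\subseteq\{v\in\mathrm{nodes}\,\mathcal T: v>_{\mathcal T}0_{\mathcal G}\}$, $\max\mathcal G$ is an antichain in $\mathcal T$, and the implant $\mathrm{impl}\,\mathcal G:=\mathrm{nodes}\,\mathcal G\setminus(\{0_{\mathcal G}\}\cup\max\mathcal G)$ is disjoint from $\mathrm{nodes}\,\mathcal T$. The explant is $\mathrm{expl}(\mathcal T,\mathcal G)=\{v:v>_{\mathcal T}0_{\mathcal G}\}\setminus(\max\mathcal G){\downarrow}_{\mathcal T}$. A family $\gamma$ is a consistent family of grafts for $\mathcal T$ if each member is a graft for $\mathcal T$, distinct members have disjoint implants,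 and for distinct $\mathcal D,\mathcal E\in\gamma$: $0_{\mathcal D}\parallel_{\mathcal T}0_{\mathcal E}$, or $0_{\mathcal D}\in(\max\mathcal E){\downarrow}_{\mathcal T}$, or $0_{\mathcal E}\in(\max\mathcal D){\downarrow}_{\mathcal T}$. The support is $\mathrm{supp}(\mathcal T,\gamma)=\mathrm{nodes}\,\mathcal T\setminus\bigcup_{\mathcal G\in\gamma}\mathrm{expl}(\mathcal T,\mathcal G)$. The hybrid $\mathrm{hybr}(\mathcal T,\gamma)=(H,<)$ has $H=\mathrm{supp}(\mathcal T,\gamma)\cup\bigcup_{\mathcal G\in\gamma}\mathrm{impl}\,\mathcal G$ and $x<y$ iff one of: (b1) $x,y\in\mathrm{supp}$ and $x<_{\mathcal T}y$; (b2) for some $\mathcal G\in\gamma$, $x,y\in\mathrm{impl}\,\mathcal G$ and $x<_{\mathcal G}y$; (b3) for some $\mathcal G\in\gamma$, $x\in\mathrm{supp}$, $y\in\mathrm{impl}\,\mathcal G$, $x\le_{\mathcal T}0_{\mathcal G}$; (b4) for some $\mathcal G\in\gamma$, $x\in\mathrm{impl}\,\mathcal G$, $y\in\mathrm{supp}\cap(\max\mathcal G){\downarrow}_{\mathcal T}$, and $x<_{\mathcal G}\mathrm{root}_{\mathcal T}(y,\max\mathcal G)$; (b5) for some distinct $\mathcal D,\mathcal E\in\gamma$, $x\in\mathrm{impl}\,\mathcal D$, $y\in\mathrm{impl}\,\mathcal E$, $0_{\mathcal E}\in(\max\mathcal D){\downarrow}_{\mathcal T}$, and $x<_{\mathcal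 D}\mathrm{root}_{\mathcal T}(0_{\mathcal E},\max\mathcal D)$. *)

theory Defs
  imports Main
begin

type_synonym 'a tree = "'a set \<times> ('a \<Rightarrow> 'a \<Rightarrow> bool)"

definition nodes :: "'a tree \<Rightarrow> 'a set" where "nodes T = fst T"
definition tless :: "'a tree \<Rightarrow> 'a \<Rightarrow> 'a \<Rightarrow> bool" where "tless T = snd T"
definition tle :: "'a tree \<Rightarrow> 'a \<Rightarrow> 'a \<Rightarrow> bool" where
  "tle T x y \<longleftrightarrow> x = y \<or> tless T x y"

definition well_ordered_by :: "('a \<Rightarrow> 'a \<Rightarrow> bool) \<Rightarrow> 'a set \<Rightarrow> bool" where
  "well_ordered_by lt P \<longleftrightarrow>
     (\<forall>x\<in>P. \<forall>y\<in>P. x = y \<or> lt x y \<or> lt y x) \<and>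
     (\<forall>S. S \<subseteq> P \<longrightarrow> S \<noteq> {} \<longrightarrow> (\<exists>m\<in>S. \<forall>s\<in>S. \<not> lt s m))"

definition is_tree :: "'a tree \<Rightarrow> bool" where
  "is_tree T \<longleftrightarrow>
     (\<forall>x y. tless T x y \<longrightarrow> x \<in> nodes T \<and> y \<in> nodes T) \<and>
     (\<forall>x. \<not> tless T x x) \<and>
     (\<forall>x y z. tless T x y \<longrightarrow> tless T y z \<longrightarrow> tless T x z) \<and>
     (\<forall>x\<in>nodes T. well_ordered_by (tless T) {v. tless T v x})"

definition incomp :: "'a tree \<Rightarrow> 'a \<Rightarrow> 'a \<Rightarrow> bool" where
  "incomp T x y \<longleftrightarrow> \<not> tle T x y \<and> \<not> tle T y x"

definition maxs :: "'a tree \<Rightarrow> 'a set" where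
  "maxs T = {x \<in> nodes T. \<not> (\<exists>y\<in>nodes T. tless T x y)}"

definition has_least :: "'a tree \<Rightarrow> bool" where
  "has_least T \<longleftrightarrow> (\<exists>z\<in>nodes T. \<forall>v\<in>nodes T. tle T z v)"

definition zero :: "'a tree \<Rightarrow> 'a" where
  "zero T = (THE z. z \<in> nodes T \<and> (\<forall>v\<in>nodes T. tle T z v))"

definition antichain :: "'a tree \<Rightarrow> 'a set \<Rightarrow> bool" where
  "antichain T A \<longleftrightarrow> A \<subseteq> nodes T \<and> (\<forall>a\<in>A. \<forall>b\<in>A. a \<noteq> b \<longrightarrow> incomp T a b)"

definition upcl :: "'a tree \<Rightarrow> 'a set \<Rightarrow> 'a set" where
  "upcl T A = {v \<in> nodes T. \<exists>a\<in>A. tle T a v}"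

definition root :: "'a tree \<Rightarrow> 'a \<Rightarrow> 'a set \<Rightarrow> 'a" where
  "root T x A = (THE r. r \<in> A \<and> tle T r x)"

definition impl :: "'a tree \<Rightarrow> 'a set" where
  "impl G = nodes G - ({zero G} \<union> maxs G)"

definition is_graft :: "'a tree \<Rightarrow> 'a tree \<Rightarrow> bool" where
  "is_graft T G \<longleftrightarrow>
     is_tree G \<and>
     (\<exists>x\<in>nodes G. \<exists>y\<in>nodes G. x \<noteq> y) \<and>
     has_least G \<and>
     zero G \<in> nodes T \<and>
     maxs G \<subseteq> {v \<in> nodes T. tless T (zero G) v} \<and>
     antichain T (maxs G) \<and>
     impl G \<inter> nodes T = {}"

definition expl :: "'a tree \<Rightarrow> 'a tree \<Rightarrow> 'a set" where
  "expl T G = {v. tless T (zero G) v} - upcl T (maxs G)"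

definition consistent_grafts :: "'a tree \<Rightarrow> 'a tree set \<Rightarrow> bool" where
  "consistent_grafts T \<gamma> \<longleftrightarrow>
     (\<forall>G\<in>\<gamma>. is_graft T G) \<and>
     (\<forall>D\<in>\<gamma>. \<forall>E\<in>\<gamma>. D \<noteq> E \<longrightarrow> impl D \<inter> impl E = {}) \<and>
     (\<forall>D\<in>\<gamma>. \<forall>E\<in>\<gamma>. D \<noteq> E \<longrightarrow>
        incomp T (zero D) (zero E) \<or> zero D \<in> upcl T (maxs E) \<or> zero E \<in> upcl T (maxs D))"

definition supp :: "'a tree \<Rightarrow> 'a tree set \<Rightarrow> 'a set" where
  "supp T \<gamma> = nodes T - (\<Union>G\<in>\<gamma>. expl T G)"

definition hybr :: "'a tree \<Rightarrow> 'a tree set \<Rightarrow> 'a tree" where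
  "hybr T \<gamma> =
    (supp T \<gamma> \<union> (\<Union>G\<in>\<gamma>. impl G),
     \<lambda>x y.
       (x \<in> supp T \<gamma> \<and> y \<in> supp T \<gamma> \<and> tless T x y) \<or>
       (\<exists>G\<in>\<gamma>. x \<in> impl G \<and> y \<in> impl G \<and> tless G x y) \<or>
       (\<exists>G\<in>\<gamma>. x \<in> supp T \<gamma> \<and> y \<in> impl G \<and> tle T x (zero G)) \<or>
       (\<exists>G\<in>\<gamma>. x \<in> impl G \<and> y \<in> supp T \<gamma> \<inter> upcl T (maxs G) \<and>
           tless G x (root T y (maxs G))) \<or>
       (\<exists>D\<in>\<gamma>. \<exists>E\<in>\<gamma>. D \<noteq> E \<and> x \<in> impl D \<and> y \<in> impl E \<and>
           zero E \<in> upcl T (maxs D) \<and> tless D x (root T (zero E) (maxs D))))"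

end

theory Submission
  imports Defs
begin


lemma tree_field: "is_tree T \<Longrightarrow> tless T x y \<Longrightarrow> x \<in> nodes T \<and> y \<in> nodes T" by (simp add: is_tree_def)
lemma tree_irrefl: "is_tree T \<Longrightarrow> \<not> tless T x x" by (simp add: is_tree_def)
lemma tree_trans: "is_tree T \<Longrightarrow> tless T x y \<Longrightarrow> tless T y z \<Longrightarrow> tless T x z" unfolding is_tree_def by blast
lemma tree_lin: assumes "is_tree T" "tless T a x" "tless T b x" shows "a = b \<or> tless T a b \<or> tless T b a"
proof -
  have "x \<in> nodes T" using tree_field[OF assms(1,2)] by simp
  then have "well_ordered_by (tless T) {v. tless T v x}" using assms(1) by (simp add: is_tree_def)
  then show ?thesis using assms(2,3) unfolding well_ordered_by_def by blast
qed
lemma tree_min: assumes "is_tree T" "x \<in> Q" shows "\<exists>m\<in>Q. \<forall>s\<in>Q. \<not> tless T s m"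
proof (cases "\<exists>s\<in>Q. tless T s x")
  case False then show ?thesis using assms(2) by blast
next
  case True
  then obtain s0 where s0: "s0 \<in> Q" "tless T s0 x" by blast
  have "x \<in> nodes T" using tree_field[OF assms(1) s0(2)] by simp
  then have wo: "well_ordered_by (tless T) {v. tless T v x}" using assms(1) by (simp add: is_tree_def)
  let ?P = "{v\<in>Q. tless T v x}"
  have "?P \<subseteq> {v. tless T v x}" "?P \<noteq> {}" using s0 by auto
  then obtain m where m: "m \<in> ?P" "\<forall>s\<in>?P. \<not> tless T s m" using wo unfolding well_ordered_by_def by meson
  have "\<forall>s\<in>Q. \<not> tless T s m"
  proof (intro ballI notI)
    fix s assume "s \<in> Q" "tless T s m"
    then have "tless T s x" using m(1) tree_trans[OF assms(1)] by blast
    then show False using m \<open>s\<in>Q\<close> \<open>tless T s m\<close> by blast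
  qed
  then show ?thesis using m(1) by blast
qed
lemma tle_lin: assumes "is_tree T" "tle T a x" "tle T b x" shows "tle T a b \<or> tle T b a"
proof (cases "a = x \<or> b = x")
  case True then show ?thesis using assms(2,3) unfolding tle_def by auto
next
  case False
  then have "tless T a x" "tless T b x" using assms(2,3) unfolding tle_def by auto
  then have "a = b \<or> tless T a b \<or> tless T b a" using tree_lin[OF assms(1)] by blast
  then show ?thesis unfolding tle_def by blast
qed
lemma tle_trans: assumes "is_tree T" "tle T x y" "tle T y z" shows "tle T x z"
  using assms(2,3) tree_trans[OF assms(1), of x y z] unfolding tle_def by blast
lemma tle_less_trans: assumes "is_tree T" "tle T x y" "tless T y z" shows "tless T x z"
  using assms(2,3) tree_trans[OF assms(1), of x y z] unfolding tle_def by blast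
lemma less_tle_trans: assumes "is_tree T" "tless T x y" "tle T y z" shows "tless T x z"
  using assms(2,3) tree_trans[OF assms(1), of x y z] unfolding tle_def by blast
lemma tle_antisym: assumes "is_tree T" "tle T x y" "tle T y x" shows "x = y"
  using assms(2,3) tree_trans[OF assms(1), of x y x] tree_irrefl[OF assms(1), of x] unfolding tle_def by blast

lemma zero_props: assumes "is_tree G" "has_least G"
  shows "zero G \<in> nodes G \<and> (\<forall>v\<in>nodes G. tle G (zero G) v)"
proof -
  obtain z where z: "z \<in> nodes G" "\<forall>v\<in>nodes G. tle G z v" using assms(2) unfolding has_least_def by blast
  have "zero G = z" unfolding zero_def
  proof (rule the_equality)
    show "z \<in> nodes G \<and> (\<forall>v\<in>nodes G. tle G z v)" using z by blast
    fix w assume "w \<in> nodes G \<and> (\<forall>v\<in>nodes G. tle G w v)"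
    then have "tle G w z" "tle G z w" using z by auto
    then show "w = z" using tle_antisym[OF assms(1)] by blast
  qed
  then show ?thesis using z by simp
qed

locale hy =
  fixes T :: "'a tree" and \<gamma> :: "'a tree set"
  assumes tree: "is_tree T" and cons: "consistent_grafts T \<gamma>"
begin

abbreviation "S \<equiv> supp T \<gamma>"
definition hl where "hl = tless (hybr T \<gamma>)"

definition "R1 x y \<longleftrightarrow> x \<in> S \<and> y \<in> S \<and> tless T x y"
definition "R2 G x y \<longleftrightarrow> G\<in>\<gamma> \<and> x \<in> impl G \<and> y \<in> impl G \<and> tless G x y"
definition "R3 G x y \<longleftrightarrow> G\<in>\<gamma> \<and> x \<in> S \<and> y \<in> impl G \<and> tle T x (zero G)"
definition "R4 G x y \<longleftrightarrow> G\<in>\<gamma> \<and> x \<in> impl G \<and> y \<in> S \<and> y \<in> upcl T (maxs G) \<and> tless G x (root T y (maxs G))"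
definition "R5 D E x y \<longleftrightarrow> D\<in>\<gamma> \<and> E\<in>\<gamma> \<and> D\<noteq>E \<and> x \<in> impl D \<and> y \<in> impl E \<and> zero E \<in> upcl T (maxs D) \<and> tless D x (root T (zero E) (maxs D))"

lemma hl_iff: "hl x y \<longleftrightarrow> R1 x y \<or> (\<exists>G. R2 G x y) \<or> (\<exists>G. R3 G x y) \<or> (\<exists>G. R4 G x y) \<or> (\<exists>D E. R5 D E x y)"
proof -
  have e: "hl = (\<lambda>x y.
       (x \<in> supp T \<gamma> \<and> y \<in> supp T \<gamma> \<and> tless T x y) \<or>
       (\<exists>G\<in>\<gamma>. x \<in> impl G \<and> y \<in> impl G \<and> tless G x y) \<or>
       (\<exists>G\<in>\<gamma>. x \<in> supp T \<gamma> \<and> y \<in> impl G \<and> tle T x (zero G)) \<or>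
       (\<exists>G\<in>\<gamma>. x \<in> impl G \<and> y \<in> supp T \<gamma> \<inter> upcl T (maxs G) \<and>
           tless G x (root T y (maxs G))) \<or>
       (\<exists>D\<in>\<gamma>. \<exists>E\<in>\<gamma>. D \<noteq> E \<and> x \<in> impl D \<and> y \<in> impl E \<and>
           zero E \<in> upcl T (maxs D) \<and> tless D x (root T (zero E) (maxs D))))"
    unfolding hl_def hybr_def by (subst tless_def, subst snd_conv, rule refl)
  show ?thesis unfolding e R1_def R2_def R3_def R4_def R5_def by blast
qed

lemma hnodes: "nodes (hybr T \<gamma>) = S \<union> (\<Union>G\<in>\<gamma>. impl G)"
  by (simp add: hybr_def nodes_def)

lemma graft: "G \<in> \<gamma> \<Longrightarrow> is_graft T G" using cons unfolding consistent_grafts_def by blast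
lemma g_tree: "G \<in> \<gamma> \<Longrightarrow> is_tree G" using graft unfolding is_graft_def by blast
lemma g_zero: "G \<in> \<gamma> \<Longrightarrow> zero G \<in> nodes G \<and> (\<forall>v\<in>nodes G. tle G (zero G) v)"
  using graft zero_props unfolding is_graft_def by blast
lemma g_zeroT: "G \<in> \<gamma> \<Longrightarrow> zero G \<in> nodes T" using graft unfolding is_graft_def by blast
lemma g_max: "G\<in>\<gamma> \<Longrightarrow> m \<in> maxs G \<Longrightarrow> m \<in> nodes T \<and> tless T (zero G) m"
  using graft unfolding is_graft_def by blast
lemma g_anti: "G\<in>\<gamma> \<Longrightarrow> m\<in>maxs G \<Longrightarrow> m'\<in>maxs G \<Longrightarrow> tle T m m' \<Longrightarrow> m = m'"
  using graft unfolding is_graft_def antichain_def incomp_def by blast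
lemma g_implT: "G\<in>\<gamma> \<Longrightarrow> u \<in> impl G \<Longrightarrow> u \<notin> nodes T"
  using graft unfolding is_graft_def by blast
lemma impl_disj: "G\<in>\<gamma> \<Longrightarrow> G'\<in>\<gamma> \<Longrightarrow> u \<in> impl G \<Longrightarrow> u \<in> impl G' \<Longrightarrow> G = G'"
  using cons unfolding consistent_grafts_def by blast
lemma supp_T: "x \<in> S \<Longrightarrow> x \<in> nodes T" by (simp add: supp_def)
lemma supp_not_impl: "x \<in> S \<Longrightarrow> G \<in> \<gamma> \<Longrightarrow> x \<notin> impl G" using supp_T g_implT by blast

lemma root_eq: assumes "G\<in>\<gamma>" "m\<in>maxs G" "tle T m y" shows "root T y (maxs G) = m"
  unfolding root_def
proof (rule the_equality)
  show "m \<in> maxs G \<and> tle T m y" using assms by blast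
  fix r assume "r \<in> maxs G \<and> tle T r y"
  then show "r = m" using tle_lin[OF tree] assms g_anti by metis
qed
lemma root_ex: assumes "G\<in>\<gamma>" "y \<in> upcl T (maxs G)"
  shows "root T y (maxs G) \<in> maxs G \<and> tle T (root T y (maxs G)) y"
proof -
  obtain m where "m \<in> maxs G" "tle T m y" using assms(2) unfolding upcl_def by blast
  then show ?thesis using root_eq assms(1) by simp
qed

lemma zeros_distinct: assumes "D\<in>\<gamma>" "E\<in>\<gamma>" "D\<noteq>E" shows "zero D \<noteq> zero E"
proof
  assume eq: "zero D = zero E"
  have "incomp T (zero D) (zero E) \<or> zero D \<in> upcl T (maxs E) \<or> zero E \<in> upcl T (maxs D)"
    using cons assms unfolding consistent_grafts_def by blast
  then show False
  proof (elim disjE)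
    assume "incomp T (zero D) (zero E)" then show False using eq unfolding incomp_def tle_def by blast
  next
    assume "zero D \<in> upcl T (maxs E)"
    then obtain m where "m \<in> maxs E" "tle T m (zero D)" unfolding upcl_def by blast
    then show False using g_max[OF assms(2)] eq tree_irrefl[OF tree] less_tle_trans[OF tree] by metis
  next
    assume "zero E \<in> upcl T (maxs D)"
    then obtain m where "m \<in> maxs D" "tle T m (zero E)" unfolding upcl_def by blast
    then show False using g_max[OF assms(1)] eq tree_irrefl[OF tree] less_tle_trans[OF tree] by metis
  qed
qed

lemma sepL: assumes "G\<in>\<gamma>" "x\<in>S" "r\<in>maxs G" "tle T x w" "tle T r w"
  shows "tle T x (zero G) \<or> tle T r x"
proof (rule ccontr)
  assume nc: "\<not> (tle T x (zero G) \<or> tle T r x)"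
  then have xr: "tless T x r" using tle_lin[OF tree assms(4,5)] unfolding tle_def by blast
  have zr: "tless T (zero G) r" using g_max assms by blast
  have zx: "tless T (zero G) x" using tree_lin[OF tree xr zr] nc unfolding tle_def by blast
  have "x \<notin> upcl T (maxs G)"
  proof
    assume "x \<in> upcl T (maxs G)"
    then obtain m where m: "m \<in> maxs G" "tle T m x" unfolding upcl_def by blast
    then have "tle T m r" using less_tle_trans[OF tree] xr tle_less_trans[OF tree] unfolding tle_def by metis
    then have "m = r" using g_anti assms m by blast
    then show False using m xr tle_less_trans[OF tree] tree_irrefl[OF tree] by metis
  qed
  then have "x \<in> expl T G" using zx unfolding expl_def by blast
  then show False using assms(1,2) unfolding supp_def by blast
qed

lemma sepM: assumes "D\<in>\<gamma>" "E\<in>\<gamma>" "D\<noteq>E" "r\<in>maxs D" "r'\<in>maxs E" "tle T r w" "tle T r' w"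
  shows "tle T r' (zero D) \<or> tle T r (zero E)"
proof -
  have "incomp T (zero D) (zero E) \<or> zero D \<in> upcl T (maxs E) \<or> zero E \<in> upcl T (maxs D)"
    using cons assms unfolding consistent_grafts_def by blast
  then show ?thesis
  proof (elim disjE)
    assume inc: "incomp T (zero D) (zero E)"
    have "tless T (zero D) w" using g_max[OF assms(1,4)] assms(6) less_tle_trans[OF tree] by blast
    moreover have "tless T (zero E) w" using g_max[OF assms(2,5)] assms(7) less_tle_trans[OF tree] by blast
    ultimately show ?thesis using tree_lin[OF tree] inc unfolding incomp_def tle_def by metis
  next
    assume "zero D \<in> upcl T (maxs E)"
    then obtain m where m: "m \<in> maxs E" "tle T m (zero D)" unfolding upcl_def by blast
    have "tless T (zero D) w" using g_max[OF assms(1,4)] assms(6) less_tle_trans[OF tree] by blast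
    then have "tle T m w" using m tle_less_trans[OF tree] unfolding tle_def by blast
    then have "m = r'" using root_eq[OF assms(2) m(1)] root_eq[OF assms(2) assms(5,7)] by simp
    then show ?thesis using m by blast
  next
    assume "zero E \<in> upcl T (maxs D)"
    then obtain m where m: "m \<in> maxs D" "tle T m (zero E)" unfolding upcl_def by blast
    have "tless T (zero E) w" using g_max[OF assms(2,5)] assms(7) less_tle_trans[OF tree] by blast
    then have "tle T m w" using m tle_less_trans[OF tree] unfolding tle_def by blast
    then have "m = r" using root_eq[OF assms(1) m(1)] root_eq[OF assms(1) assms(4,6)] by simp
    then show ?thesis using m by blast
  qed
qed

end

context hy begin

lemma root_up: assumes "G\<in>\<gamma>" "y \<in> upcl T (maxs G)" "tle T y z" "z \<in> nodes T"
  shows "z \<in> upcl T (maxs G) \<and> root T z (maxs G) = root T y (maxs G)"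
proof -
  have r: "root T y (maxs G) \<in> maxs G" "tle T (root T y (maxs G)) y" using root_ex assms by auto
  then have "tle T (root T y (maxs G)) z" using tle_trans[OF tree] assms(3) by blast
  then show ?thesis using r root_eq[OF assms(1) r(1)] assms(4) unfolding upcl_def by blast
qed

lemma t11: "R1 x y \<Longrightarrow> R1 y z \<Longrightarrow> hl x z"
  unfolding hl_iff R1_def using tree_trans[OF tree] by blast
lemma t13: "R1 x y \<Longrightarrow> R3 G y z \<Longrightarrow> hl x z"
  unfolding hl_iff R1_def R3_def using tle_less_trans[OF tree] unfolding tle_def by metis
lemma t22: "R2 G x y \<Longrightarrow> R2 G' y z \<Longrightarrow> hl x z"
  unfolding hl_iff R2_def using impl_disj tree_trans g_tree by metis
lemma t24: "R2 G x y \<Longrightarrow> R4 G' y z \<Longrightarrow> hl x z"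
  unfolding hl_iff R2_def R4_def using impl_disj tree_trans g_tree by metis
lemma t25: "R2 G x y \<Longrightarrow> R5 D E y z \<Longrightarrow> hl x z"
  unfolding hl_iff R2_def R5_def using impl_disj tree_trans g_tree by metis
lemma t32: "R3 G x y \<Longrightarrow> R2 G' y z \<Longrightarrow> hl x z"
  unfolding hl_iff R2_def R3_def using impl_disj by metis
lemma t34: assumes "R3 G x y" "R4 G' y z" shows "hl x z"
proof -
  have G: "G' = G" using assms impl_disj unfolding R3_def R4_def by blast
  have r: "root T z (maxs G) \<in> maxs G" "tle T (root T z (maxs G)) z" using root_ex assms G unfolding R4_def by auto
  have "tless T x z" using assms(1) g_max[OF _ r(1)] r(2) tle_less_trans[OF tree] less_tle_trans[OF tree]
    unfolding R3_def by metis
  then show ?thesis using assms unfolding hl_iff R1_def R3_def R4_def by blast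
qed
lemma t35: assumes "R3 G x y" "R5 D E y z" shows "hl x z"
proof -
  have G: "D = G" using assms impl_disj unfolding R3_def R5_def by blast
  have r: "root T (zero E) (maxs D) \<in> maxs D" "tle T (root T (zero E) (maxs D)) (zero E)"
    using root_ex assms unfolding R5_def by auto
  have "tless T x (zero E)" using assms(1) G g_max[OF _ r(1)] r(2) tle_less_trans[OF tree] less_tle_trans[OF tree]
    unfolding R3_def by metis
  then have "R3 E x z" using assms unfolding R3_def R5_def tle_def by blast
  then show ?thesis unfolding hl_iff by blast
qed
lemma t41: assumes "R4 G x y" "R1 y z" shows "hl x z"
proof -
  have yz: "tle T y z" "z \<in> nodes T" "G \<in> \<gamma>" "y \<in> upcl T (maxs G)" using assms supp_T unfolding R1_def R4_def tle_def by auto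
  have "z \<in> upcl T (maxs G) \<and> root T z (maxs G) = root T y (maxs G)"
    using root_up[OF yz(3,4,1,2)] .
  then have "R4 G x z" using assms unfolding R4_def R1_def by auto
  then show ?thesis unfolding hl_iff by blast
qed
lemma t43: assumes "R4 G x y" "R3 E y z" shows "hl x z"
proof -
  have u: "zero E \<in> upcl T (maxs G) \<and> root T (zero E) (maxs G) = root T y (maxs G)"
    using root_up assms g_zeroT unfolding R4_def R3_def by metis
  have "G \<noteq> E"
  proof
    assume "G = E"
    have E: "E \<in> \<gamma>" using assms unfolding R3_def by blast
    have "zero E \<in> upcl T (maxs E)" using u \<open>G = E\<close> by simp
    then have r: "root T (zero E) (maxs E) \<in> maxs E" "tle T (root T (zero E) (maxs E)) (zero E)"
      using root_ex[OF E] by blast+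
    show False using g_max[OF E r(1)] less_tle_trans[OF tree _ r(2)] tree_irrefl[OF tree] by blast
  qed
  then have "R5 G E x z" using u assms unfolding R4_def R3_def R5_def by auto
  then show ?thesis unfolding hl_iff by blast
qed
lemma t52: "R5 D E x y \<Longrightarrow> R2 G y z \<Longrightarrow> hl x z"
  unfolding hl_iff R2_def R5_def using impl_disj by metis
lemma t54: assumes "R5 D E x y" "R4 G y z" shows "hl x z"
proof -
  have G: "G = E" using assms impl_disj unfolding R4_def R5_def by blast
  have rE: "root T z (maxs E) \<in> maxs E" "tle T (root T z (maxs E)) z" using root_ex assms G unfolding R4_def by auto
  have "tless T (zero E) (root T z (maxs E))" using g_max rE(1) assms unfolding R5_def by blast
  then have "tless T (zero E) z" using less_tle_trans[OF tree _ rE(2)] by blast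
  then have ez: "tle T (zero E) z" unfolding tle_def by blast
  have dd: "D \<in> \<gamma>" "zero E \<in> upcl T (maxs D)" "z \<in> nodes T" using assms supp_T unfolding R5_def R4_def by auto
  have u: "z \<in> upcl T (maxs D) \<and> root T z (maxs D) = root T (zero E) (maxs D)"
    using root_up[OF dd(1,2) ez dd(3)] .
  then have "R4 D x z" using assms unfolding R4_def R5_def by auto
  then show ?thesis unfolding hl_iff by blast
qed
lemma t55: assumes "R5 D E x y" "R5 D' F y z" shows "hl x z"
proof -
  have G: "D' = E" using assms impl_disj unfolding R5_def by blast
  have rE: "root T (zero F) (maxs E) \<in> maxs E" "tle T (root T (zero F) (maxs E)) (zero F)"
    using root_ex assms G unfolding R5_def by auto
  have lt: "tless T (zero E) (zero F)" using g_max[OF _ rE(1)] rE(2) less_tle_trans[OF tree] assms G unfolding R5_def by metis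
  then have ef: "tle T (zero E) (zero F)" unfolding tle_def by blast
  have dd: "D \<in> \<gamma>" "zero E \<in> upcl T (maxs D)" "zero F \<in> nodes T" using assms g_zeroT unfolding R5_def by auto
  have u: "zero F \<in> upcl T (maxs D) \<and> root T (zero F) (maxs D) = root T (zero E) (maxs D)"
    using root_up[OF dd(1,2) ef dd(3)] .
  have rD: "root T (zero E) (maxs D) \<in> maxs D" "tle T (root T (zero E) (maxs D)) (zero E)"
    using root_ex assms unfolding R5_def by auto
  have "tless T (zero D) (zero F)" using g_max[OF _ rD(1)] rD(2) lt less_tle_trans[OF tree] tree_trans[OF tree]
    assms unfolding R5_def by metis
  then have "D \<noteq> F" using tree_irrefl[OF tree] by blast
  then have "R5 D F x z" using u assms unfolding R5_def by auto
  then show ?thesis unfolding hl_iff by blast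
qed

lemma tS: "R1 x y \<Longrightarrow> y \<in> S" "R4 G x y \<Longrightarrow> y \<in> S"
  "R2 G x y \<Longrightarrow> y \<in> impl G \<and> G \<in> \<gamma>" "R3 G x y \<Longrightarrow> y \<in> impl G \<and> G \<in> \<gamma>" "R5 D E x y \<Longrightarrow> y \<in> impl E \<and> E \<in> \<gamma>"
  unfolding R1_def R2_def R3_def R4_def R5_def by auto
lemma fS: "R1 x y \<Longrightarrow> x \<in> S" "R3 G x y \<Longrightarrow> x \<in> S"
  "R2 G x y \<Longrightarrow> x \<in> impl G \<and> G \<in> \<gamma>" "R4 G x y \<Longrightarrow> x \<in> impl G \<and> G \<in> \<gamma>" "R5 D E x y \<Longrightarrow> x \<in> impl D \<and> D \<in> \<gamma>"
  unfolding R1_def R2_def R3_def R4_def R5_def by auto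

lemma hl_trans: assumes "hl x y" "hl y z" shows "hl x z"
proof -
  have B: "R1 y z \<or> (\<exists>G. R2 G y z) \<or> (\<exists>G. R3 G y z) \<or> (\<exists>G. R4 G y z) \<or> (\<exists>D E. R5 D E y z)"
    using assms(2) hl_iff by blast
  have "R1 x y \<or> (\<exists>G. R2 G x y) \<or> (\<exists>G. R3 G x y) \<or> (\<exists>G. R4 G x y) \<or> (\<exists>D E. R5 D E x y)"
    using assms(1) hl_iff by blast
  then show ?thesis
  proof (elim disjE exE)
    assume a: "R1 x y"
    from B show ?thesis
    proof (elim disjE exE)
      fix G assume "R2 G y z" then show ?thesis using tS(1)[OF a] fS(3) supp_not_impl by blast
    next
      fix D E assume "R5 D E y z" then show ?thesis using tS(1)[OF a] fS(5) supp_not_impl by blast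
    qed (fact t11[OF a], fact t13[OF a], meson tS(1)[OF a] fS(4) supp_not_impl)
  next
    fix G assume a: "R2 G x y"
    from B show ?thesis
    proof (elim disjE exE)
      assume "R1 y z" then show ?thesis using tS(3)[OF a] fS(1) supp_not_impl by blast
    next
      fix G' assume "R3 G' y z" then show ?thesis using tS(3)[OF a] fS(2) supp_not_impl by blast
    qed (fact t22[OF a], fact t24[OF a], fact t25[OF a])
  next
    fix G assume a: "R3 G x y"
    from B show ?thesis
    proof (elim disjE exE)
      assume "R1 y z" then show ?thesis using tS(4)[OF a] fS(1) supp_not_impl by blast
    next
      fix G' assume "R3 G' y z" then show ?thesis using tS(4)[OF a] fS(2) supp_not_impl by blast
    qed (fact t32[OF a], fact t34[OF a], fact t35[OF a])
  next
    fix G assume a: "R4 G x y"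
    from B show ?thesis
    proof (elim disjE exE)
      fix G' assume "R2 G' y z" then show ?thesis using tS(2)[OF a] fS(3) supp_not_impl by blast
    next
      fix G' assume "R4 G' y z" then show ?thesis using tS(2)[OF a] fS(4) supp_not_impl by blast
    next
      fix D E assume "R5 D E y z" then show ?thesis using tS(2)[OF a] fS(5) supp_not_impl by blast
    qed (fact t41[OF a], fact t43[OF a])
  next
    fix D E assume a: "R5 D E x y"
    from B show ?thesis
    proof (elim disjE exE)
      assume "R1 y z" then show ?thesis using tS(5)[OF a] fS(1) supp_not_impl by blast
    next
      fix G' assume "R3 G' y z" then show ?thesis using tS(5)[OF a] fS(2) supp_not_impl by blast
    qed (fact t52[OF a], fact t54[OF a], fact t55[OF a])
  qed
qed

lemma hl_irrefl: "\<not> hl x x"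
  unfolding hl_iff R1_def R2_def R3_def R4_def R5_def
  using tree_irrefl[OF tree] tree_irrefl[OF g_tree] supp_not_impl impl_disj by blast

lemma hl_field: "hl x y \<Longrightarrow> x \<in> nodes (hybr T \<gamma>) \<and> y \<in> nodes (hybr T \<gamma>)"
  unfolding hl_iff hnodes R1_def R2_def R3_def R4_def R5_def by blast

end

context hy begin

lemma l11: "R1 x z \<Longrightarrow> R1 y z \<Longrightarrow> x = y \<or> hl x y \<or> hl y x"
  unfolding hl_iff R1_def using tree_lin[OF tree] by blast
lemma l14: assumes "R1 x z" "R4 G y z" shows "hl x y \<or> hl y x"
proof -
  have G: "G \<in> \<gamma>" and r: "root T z (maxs G) \<in> maxs G" "tle T (root T z (maxs G)) z"
    using assms root_ex unfolding R4_def by auto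
  have "tle T x (zero G) \<or> tle T (root T z (maxs G)) x"
    using sepL[OF G _ r(1), of x z] assms r(2) unfolding R1_def tle_def by blast
  then show ?thesis
  proof
    assume "tle T x (zero G)" then have "R3 G x y" using assms unfolding R1_def R3_def R4_def by blast
    then show ?thesis unfolding hl_iff by blast
  next
    assume h: "tle T (root T z (maxs G)) x"
    then have "x \<in> upcl T (maxs G)" "root T x (maxs G) = root T z (maxs G)"
      using r(1) h root_eq[OF G r(1) h] assms supp_T unfolding R1_def upcl_def by auto
    then have "R4 G y x" using assms unfolding R1_def R4_def by auto
    then show ?thesis unfolding hl_iff by blast
  qed
qed
lemma l44: assumes "R4 G x z" "R4 G' y z" shows "x = y \<or> hl x y \<or> hl y x"
proof -
  have G: "G \<in> \<gamma>" "G' \<in> \<gamma>" and r: "root T z (maxs G) \<in> maxs G" "tle T (root T z (maxs G)) z"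
    and r': "root T z (maxs G') \<in> maxs G'" "tle T (root T z (maxs G')) z"
    using assms root_ex unfolding R4_def by auto
  show ?thesis
  proof (cases "G = G'")
    case True
    then have "x = y \<or> tless G x y \<or> tless G y x" using tree_lin[OF g_tree[OF G(1)]] assms unfolding R4_def by blast
    then show ?thesis using assms True unfolding hl_iff R2_def R4_def by blast
  next
    case False
    have "tle T (root T z (maxs G')) (zero G) \<or> tle T (root T z (maxs G)) (zero G')"
      using sepM[OF G False r(1) r'(1) r(2) r'(2)] .
    then show ?thesis
    proof
      assume h: "tle T (root T z (maxs G')) (zero G)"
      then have "zero G \<in> upcl T (maxs G')" "root T (zero G) (maxs G') = root T z (maxs G')"
        using r' root_eq[OF G(2) r'(1) h] g_zeroT[OF G(1)] unfolding upcl_def by auto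
      then have "R5 G' G y x" using assms False unfolding R4_def R5_def by auto
      then show ?thesis unfolding hl_iff by blast
    next
      assume h: "tle T (root T z (maxs G)) (zero G')"
      then have "zero G' \<in> upcl T (maxs G)" "root T (zero G') (maxs G) = root T z (maxs G)"
        using r root_eq[OF G(1) r(1) h] g_zeroT[OF G(2)] unfolding upcl_def by auto
      then have "R5 G G' x y" using assms False unfolding R4_def R5_def by auto
      then show ?thesis unfolding hl_iff by blast
    qed
  qed
qed
lemma l22: "R2 E x z \<Longrightarrow> R2 E' y z \<Longrightarrow> x = y \<or> hl x y \<or> hl y x"
  unfolding hl_iff R2_def using tree_lin g_tree impl_disj by metis
lemma l23: "R2 E x z \<Longrightarrow> R3 E' y z \<Longrightarrow> hl y x"
  unfolding hl_iff R2_def R3_def using impl_disj by metis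
lemma l25: "R2 E x z \<Longrightarrow> R5 D E' y z \<Longrightarrow> hl y x"
  unfolding hl_iff R2_def R5_def using impl_disj by metis
lemma l33: "R3 E x z \<Longrightarrow> R3 E' y z \<Longrightarrow> x = y \<or> hl x y \<or> hl y x"
proof -
  assume a: "R3 E x z" "R3 E' y z"
  then have "E = E'" using impl_disj unfolding R3_def by blast
  then have "tle T x y \<or> tle T y x" using tle_lin[OF tree] a unfolding R3_def by blast
  then show ?thesis using a unfolding hl_iff R1_def R3_def tle_def by blast
qed
lemma l35: assumes "R3 E x z" "R5 D E' y z" shows "hl x y \<or> hl y x"
proof -
  have E: "E' = E" using assms impl_disj unfolding R3_def R5_def by blast
  have D: "D \<in> \<gamma>" and r: "root T (zero E) (maxs D) \<in> maxs D" "tle T (root T (zero E) (maxs D)) (zero E)"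
    using assms root_ex E unfolding R5_def by auto
  have "tle T x (zero D) \<or> tle T (root T (zero E) (maxs D)) x"
    using sepL[OF D _ r(1), of x "zero E"] assms r(2) unfolding R3_def by blast
  then show ?thesis
  proof
    assume "tle T x (zero D)" then have "R3 D x y" using assms unfolding R3_def R5_def by blast
    then show ?thesis unfolding hl_iff by blast
  next
    assume h: "tle T (root T (zero E) (maxs D)) x"
    then have "x \<in> upcl T (maxs D)" "root T x (maxs D) = root T (zero E) (maxs D)"
      using r(1) h root_eq[OF D r(1) h] assms supp_T unfolding R3_def upcl_def by auto
    then have "R4 D y x" using assms E unfolding R3_def R5_def R4_def by auto
    then show ?thesis unfolding hl_iff by blast
  qed
qed
lemma l55: assumes "R5 D E x z" "R5 D' E' y z" shows "x = y \<or> hl x y \<or> hl y x"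
proof -
  have E: "E' = E" using assms impl_disj unfolding R5_def by blast
  have G: "D \<in> \<gamma>" "D' \<in> \<gamma>" and r: "root T (zero E) (maxs D) \<in> maxs D" "tle T (root T (zero E) (maxs D)) (zero E)"
    and r': "root T (zero E) (maxs D') \<in> maxs D'" "tle T (root T (zero E) (maxs D')) (zero E)"
    using assms root_ex E unfolding R5_def by auto
  show ?thesis
  proof (cases "D = D'")
    case True
    then have "x = y \<or> tless D x y \<or> tless D y x" using tree_lin[OF g_tree[OF G(1)]] assms E unfolding R5_def by blast
    then show ?thesis using assms True unfolding hl_iff R2_def R5_def by blast
  next
    case False
    have "tle T (root T (zero E) (maxs D')) (zero D) \<or> tle T (root T (zero E) (maxs D)) (zero D')"
      using sepM[OF G False r(1) r'(1) r(2) r'(2)] .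
    then show ?thesis
    proof
      assume h: "tle T (root T (zero E) (maxs D')) (zero D)"
      then have "zero D \<in> upcl T (maxs D')" "root T (zero D) (maxs D') = root T (zero E) (maxs D')"
        using r' root_eq[OF G(2) r'(1) h] g_zeroT[OF G(1)] unfolding upcl_def by auto
      then have "R5 D' D y x" using assms False E unfolding R5_def by auto
      then show ?thesis unfolding hl_iff by blast
    next
      assume h: "tle T (root T (zero E) (maxs D)) (zero D')"
      then have "zero D' \<in> upcl T (maxs D)" "root T (zero D') (maxs D) = root T (zero E) (maxs D)"
        using r root_eq[OF G(1) r(1) h] g_zeroT[OF G(2)] unfolding upcl_def by auto
      then have "R5 D D' x y" using assms False E unfolding R5_def by auto
      then show ?thesis unfolding hl_iff by blast
    qed
  qed
qed

lemma cS: "z \<in> S \<Longrightarrow> R2 G y z \<Longrightarrow> False" "z \<in> S \<Longrightarrow> R3 G y z \<Longrightarrow> False" "z \<in> S \<Longrightarrow> R5 D G y z \<Longrightarrow> False"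
  using tS(3-5) supp_not_impl by blast+
lemma cI: "z \<in> impl E \<Longrightarrow> E \<in> \<gamma> \<Longrightarrow> R1 y z \<Longrightarrow> False" "z \<in> impl E \<Longrightarrow> E \<in> \<gamma> \<Longrightarrow> R4 G y z \<Longrightarrow> False"
  using tS(1,2) supp_not_impl by blast+

lemma hl_lin: assumes "hl x z" "hl y z" shows "x = y \<or> hl x y \<or> hl y x"
proof -
  have B: "R1 y z \<or> (\<exists>G. R2 G y z) \<or> (\<exists>G. R3 G y z) \<or> (\<exists>G. R4 G y z) \<or> (\<exists>D E. R5 D E y z)"
    using assms(2) hl_iff by blast
  have "R1 x z \<or> (\<exists>G. R2 G x z) \<or> (\<exists>G. R3 G x z) \<or> (\<exists>G. R4 G x z) \<or> (\<exists>D E. R5 D E x z)"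
    using assms(1) hl_iff by blast
  then show ?thesis
  proof (elim disjE exE)
    assume a: "R1 x z"
    from B show ?thesis
    proof (elim disjE exE)
      assume "R1 y z" then show ?thesis using l11 a by blast
    next
      fix G assume "R4 G y z" then show ?thesis using l14 a by blast
    qed (use tS(1)[OF a] cS in blast)+
  next
    fix G assume a: "R4 G x z"
    from B show ?thesis
    proof (elim disjE exE)
      assume "R1 y z" then show ?thesis using l14 a by blast
    next
      fix G' assume "R4 G' y z" then show ?thesis using l44 a by blast
    qed (use tS(2)[OF a] cS in blast)+
  next
    fix E assume a: "R2 E x z"
    from B show ?thesis
    proof (elim disjE exE)
      fix E' assume "R2 E' y z" then show ?thesis using l22 a by blast
    next
      fix E' assume "R3 E' y z" then show ?thesis using l23 a by blast
    next
      fix D E' assume "R5 D E' y z" then show ?thesis using l25 a by blast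
    qed (use tS(3)[OF a] cI in blast)+
  next
    fix E assume a: "R3 E x z"
    from B show ?thesis
    proof (elim disjE exE)
      fix E' assume "R2 E' y z" then show ?thesis using l23 a by blast
    next
      fix E' assume "R3 E' y z" then show ?thesis using l33 a by blast
    next
      fix D E' assume "R5 D E' y z" then show ?thesis using l35 a by blast
    qed (use tS(4)[OF a] cI in blast)+
  next
    fix D E assume a: "R5 D E x z"
    from B show ?thesis
    proof (elim disjE exE)
      fix E' assume "R2 E' y z" then show ?thesis using l25 a by blast
    next
      fix E' assume "R3 E' y z" then show ?thesis using l35 a by blast
    next
      fix D' E' assume "R5 D' E' y z" then show ?thesis using l55 a by blast
    qed (use tS(5)[OF a] cI in blast)+
  qed
qed

lemma hl_min: assumes "Q \<subseteq> nodes (hybr T \<gamma>)" "q \<in> Q" shows "\<exists>m\<in>Q. \<forall>s\<in>Q. \<not> hl s m"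
proof -
  define A where "A = {a. a \<in> Q \<inter> S \<or> (\<exists>G\<in>\<gamma>. a = zero G \<and> (\<exists>u\<in>Q. u \<in> impl G))}"
  have phiS: "s \<in> Q \<Longrightarrow> s \<in> S \<Longrightarrow> s \<in> A" for s unfolding A_def by blast
  have phiI: "s \<in> Q \<Longrightarrow> G \<in> \<gamma> \<Longrightarrow> s \<in> impl G \<Longrightarrow> zero G \<in> A" for s G unfolding A_def by blast
  have "q \<in> S \<or> (\<exists>G\<in>\<gamma>. q \<in> impl G)" using assms hnodes by auto
  then obtain a0 where "a0 \<in> A" using phiS phiI assms(2) by blast
  then obtain a where a: "a \<in> A" and amin: "\<forall>s\<in>A. \<not> tless T s a" using tree_min[OF tree] by blast
  have below: "G \<in> \<gamma> \<Longrightarrow> y \<in> upcl T (maxs G) \<Longrightarrow> tless T (zero G) y" for G y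
    using root_ex g_max less_tle_trans[OF tree] by metis
  show ?thesis
  proof (cases "a \<in> Q \<inter> S")
    case True
    have "\<forall>s\<in>Q. \<not> hl s a"
    proof (intro ballI notI)
      fix s assume s: "s \<in> Q" "hl s a"
      then show False unfolding hl_iff
      proof (elim disjE exE)
        assume "R1 s a" then show False using amin phiS s(1) unfolding R1_def by blast
      next
        fix G assume "R4 G s a" then show False using amin phiI s(1) below unfolding R4_def by blast
      qed (use True supp_not_impl tS in blast)+
    qed
    then show ?thesis using True by blast
  next
    case False
    then obtain G u where G: "G \<in> \<gamma>" "a = zero G" "u \<in> Q" "u \<in> impl G" using a unfolding A_def by blast
    obtain m where m: "m \<in> Q \<inter> impl G" and mmin: "\<forall>s\<in>Q \<inter> impl G. \<not> tless G s m"
      using tree_min[OF g_tree[OF G(1)], of u "Q \<inter> impl G"] G by blast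
    have "\<forall>s\<in>Q. \<not> hl s m"
    proof (intro ballI notI)
      fix s assume s: "s \<in> Q" "hl s m"
      then show False unfolding hl_iff
      proof (elim disjE exE)
        fix G' assume h: "R2 G' s m"
        then have "G' = G" using impl_disj m G unfolding R2_def by blast
        then show False using h mmin s(1) unfolding R2_def by blast
      next
        fix G' assume h: "R3 G' s m"
        then have "G' = G" using impl_disj m G unfolding R3_def by blast
        then have "s = a \<or> tless T s a" using h G unfolding R3_def tle_def by blast
        then show False using False s(1) h amin phiS unfolding R3_def by blast
      next
        fix D E assume h: "R5 D E s m"
        then have "E = G" using impl_disj m G unfolding R5_def by blast
        then show False using h amin phiI s(1) below G unfolding R5_def by blast
      qed (use m supp_not_impl G tS in blast)+
    qed
    then show ?thesis using m by blast
  qed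
qed

end

theorem mainTheorem7:
  assumes "is_tree T"
    and "consistent_grafts T \<gamma>"
  shows "is_tree (hybr T \<gamma>)"
proof -
  interpret hy T \<gamma> using assms by unfold_locales
  have wo: "well_ordered_by (tless (hybr T \<gamma>)) {v. tless (hybr T \<gamma>) v x}" for x
    unfolding well_ordered_by_def
  proof (intro conjI allI impI ballI)
    fix a b assume "a \<in> {v. tless (hybr T \<gamma>) v x}" "b \<in> {v. tless (hybr T \<gamma>) v x}"
    then show "a = b \<or> tless (hybr T \<gamma>) a b \<or> tless (hybr T \<gamma>) b a" using hl_lin unfolding hl_def by simp
  next
    fix Q assume "Q \<subseteq> {v. tless (hybr T \<gamma>) v x}" "Q \<noteq> {}"
    moreover then have "Q \<subseteq> nodes (hybr T \<gamma>)" using hl_field unfolding hl_def by blast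
    ultimately show "\<exists>m\<in>Q. \<forall>s\<in>Q. \<not> tless (hybr T \<gamma>) s m" using hl_min unfolding hl_def by blast
  qed
  show ?thesis unfolding is_tree_def
    using hl_field hl_irrefl hl_trans wo unfolding hl_def by blast
qed

end
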